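(* Let $\Theta=(\theta_1,\dots,\theta_N)$ be a realisation of a Kuramoto stochastic block model (real-valued lifted phases) which is in synchronized steady state by time $t_{SS}$, let $\omega$ denote the common frequency $\dot\theta_i(t)$ for $t\ge t_{SS}$, and let $\Delta\theta_i=\theta_i(t_{SS})$. Let $e^{\imath\Theta}$ denote the complex path $t\mapsto(e^{\imath\theta_1(t)},\dots,e^{\imath\theta_N(t)})$. Then for every $T>0$, $M\ge 1$ and $I=(i_1,\dots,i_M)\in[N]^M$, $$S^{SS}_I(e^{\imath\Theta})(T)=\frac{\lambda_I}{M!}\left(e^{\imath\omega T}-1\right)^M,\qquad \lambda_I=e^{\imath\sum_{k=1}^M\Delta\theta_{i_k}},$$ and for all $i,j\in[N]$, $L^{SS}_{ij}(e^{\imath\Theta})(T)=0$.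
   Context: A Kuramoto stochastic block model (KSBM) realisation is a solution of $\dot\theta_i=\omega_i+\sum_j\widetilde C_{ij}\sin(\theta_j-\theta_i)$, $i\in[N]$, where the coupling matrix $\widetilde C$ is obtained from a stochastic block model adjacency matrix and the intrinsic frequencies $\omega_i$ are real numbers; phases are lifted to $\mathbb{R}$. The system is in synchronized steady state by time $t_{SS}$ if $\dot\theta_i(t)=\dot\theta_j(t)$ for all $i,j$ and all $t\ge t_{SS}$; this common value does not depend on $t$ and is denoted $\omega$, so that $\theta_i(t)=\omega(t-t_{SS})+\Delta\theta_i$ for $t\ge t_{SS}$. For a piecewise smooth path $\gamma:[a,b]\to\mathbb{C}^N$ and $I=(i_1,\dots,i_M)$, the path signature is $S_I(\gamma)=\int_{a<t_1<\dots<t_M<b}\dot\gamma_{i_1}(t_1)\cdots\dot\gamma_{i_M}(t_M)\,dt_1\cdots dt_M$; the lead matrix is $L_{ij}(\gamma)=\frac12(S_{(i,j)}(\gamma)-S_{(j,i)}(\gamma))$. Steady-state versions: $S^{SS}_I(\gamma)(T)=S_I(\gamma|_{[t_{SS},t_{SS}+T]})$, $L^{SS}_{ij}(\gamma)(T)=L_{ij}(\gamma|_{[t_{SS},t_{SS}+T]})$. *)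

theory Defs
  imports "HOL-Analysis.Analysis"
begin

text \<open>Kuramoto dynamics: theta i is the (lifted) phase of oscillator i (i < N),
  C the coupling matrix, om the intrinsic frequencies. The ODE is required at every time t (phases lifted to R).\<close>
definition kuramoto_solution ::
  "nat \<Rightarrow> (nat \<Rightarrow> nat \<Rightarrow> real) \<Rightarrow> (nat \<Rightarrow> real) \<Rightarrow> (nat \<Rightarrow> real \<Rightarrow> real) \<Rightarrow> bool" where
  "kuramoto_solution N C om theta \<longleftrightarrow>
     (\<forall>i<N. \<forall>t. (theta i has_real_derivative
        (om i + (\<Sum>j<N. C i j * sin (theta j t - theta i t)))) (at t))"

definition sync_steady_state :: "nat \<Rightarrow> (nat \<Rightarrow> real \<Rightarrow> real) \<Rightarrow> real \<Rightarrow> bool" where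
  "sync_steady_state N theta tSS \<longleftrightarrow>
     (\<forall>t\<ge>tSS. \<forall>i<N. \<forall>j<N. deriv (theta i) t = deriv (theta j) t)"

fun path_sig :: "(nat \<Rightarrow> real \<Rightarrow> complex) \<Rightarrow> nat list \<Rightarrow> real \<Rightarrow> real \<Rightarrow> complex" where
  "path_sig \<gamma> [] a b = 1"
| "path_sig \<gamma> (i # I) a b =
     integral {a..b} (\<lambda>s. vector_derivative (\<gamma> i) (at s within {a..b}) * path_sig \<gamma> I s b)"

definition lead_matrix :: "(nat \<Rightarrow> real \<Rightarrow> complex) \<Rightarrow> nat \<Rightarrow> nat \<Rightarrow> real \<Rightarrow> real \<Rightarrow> complex" where
  "lead_matrix \<gamma> i j a b = (path_sig \<gamma> [i, j] a b - path_sig \<gamma> [j, i] a b) / 2"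

definition sig_SS :: "(nat \<Rightarrow> real \<Rightarrow> complex) \<Rightarrow> real \<Rightarrow> nat list \<Rightarrow> real \<Rightarrow> complex" where
  "sig_SS \<gamma> tSS I T = path_sig \<gamma> I tSS (tSS + T)"

definition lead_SS :: "(nat \<Rightarrow> real \<Rightarrow> complex) \<Rightarrow> real \<Rightarrow> nat \<Rightarrow> nat \<Rightarrow> real \<Rightarrow> complex" where
  "lead_SS \<gamma> tSS i j T = lead_matrix \<gamma> i j tSS (tSS + T)"

definition exp_i_path :: "(nat \<Rightarrow> real \<Rightarrow> real) \<Rightarrow> nat \<Rightarrow> real \<Rightarrow> complex" where
  "exp_i_path theta i t = exp (\<i> * complex_of_real (theta i t))"

end

theory Submission
  imports Defs
begin


lemma E_deriv:
  "((\<lambda>s::real. exp (\<i> * complex_of_real (\<omega> * (s - t0)))) has_vector_derivative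
     (\<i> * of_real \<omega> * exp (\<i> * complex_of_real (\<omega> * (s - t0))))) (at s within S)"
proof -
  have "((\<lambda>z. exp (\<i> * (of_real \<omega> * (z - of_real t0)))) has_field_derivative
     (\<i> * of_real \<omega> * exp (\<i> * (of_real \<omega> * (of_real s - of_real t0))))) (at (of_real s))"
    by (auto intro!: derivative_eq_intros)
  from has_vector_derivative_real_field[OF this]
  show ?thesis by (auto intro: has_vector_derivative_at_within)
qed

lemma sig_formula:
  fixes \<gamma> :: "nat \<Rightarrow> real \<Rightarrow> complex" and c :: "nat \<Rightarrow> complex" and \<omega> t0 :: real
  defines "E \<equiv> (\<lambda>s::real. exp (\<i> * complex_of_real (\<omega> * (s - t0))))"
  assumes eq: "\<forall>i\<in>set I. \<forall>s\<ge>t0. \<gamma> i s = c i * E s"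
  shows "t0 \<le> a \<Longrightarrow> a \<le> b \<Longrightarrow> path_sig \<gamma> I a b =
     (\<Prod>k<length I. c (I!k)) * (E b - E a)^length I / fact (length I)"
  using eq
proof (induction I arbitrary: a)
  case Nil
  then show ?case by simp
next
  case (Cons i I)
  define m where "m = length I"
  define P where "P = (\<Prod>k<m. c (I!k))"
  have IH: "path_sig \<gamma> I s b = P * (E b - E s)^m / fact m" if "a \<le> s" "s \<le> b" for s
    using Cons that unfolding P_def m_def by auto
  have vd: "vector_derivative (\<gamma> i) (at s within {a..b}) = c i * (\<i> * of_real \<omega> * E s)"
    if "a \<le> s" "s \<le> b" "a < b" for s
  proof -
    have "((\<lambda>s. c i * E s) has_vector_derivative c i * (\<i> * of_real \<omega> * E s)) (at s within {a..b})"
      unfolding E_def by (intro has_vector_derivative_mult_right E_deriv)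
    then have "(\<gamma> i has_vector_derivative c i * (\<i> * of_real \<omega> * E s)) (at s within {a..b})"
      by (rule has_vector_derivative_transform[rotated 2]) (use that Cons in auto)
    then show ?thesis using vector_derivative_within_cbox[of a b s] that by auto
  qed
  define F where "F = (\<lambda>s. (- (c i * P) / fact (Suc m)) * (E b - E s)^Suc m)"
  show ?case
  proof (cases "a = b")
    case True
    then show ?thesis by simp
  next
    case False
    then have ab: "a < b" using Cons by auto
    have "((\<lambda>s. vector_derivative (\<gamma> i) (at s within {a..b}) * path_sig \<gamma> I s b) has_integral F b - F a) {a..b}"
    proof (rule has_integral_spike_finite[where S="{}"])
      show "((\<lambda>s. c i * (\<i> * of_real \<omega> * E s) * (P * (E b - E s)^m / fact m)) has_integral F b - F a) {a..b}"
      proof (rule fundamental_theorem_of_calculus)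
        show "a \<le> b" using ab by simp
        fix x assume "x \<in> {a..b}"
        have d0: "((\<lambda>z. exp (\<i> * (of_real \<omega> * (z - of_real t0)))) has_field_derivative
            \<i> * of_real \<omega> * E x) (at (of_real x))"
          unfolding E_def by (rule DERIV_cong, (rule derivative_eq_intros refl)+) simp
        have "((\<lambda>z. (- (c i * P) / fact (Suc m)) * (E b - exp (\<i> * (of_real \<omega> * (z - of_real t0))))^Suc m)
           has_field_derivative (- (c i * P) / fact (Suc m)) * (of_nat (Suc m) * (E b - E x)^m * (0 - \<i> * of_real \<omega> * E x))) (at (of_real x))"
          by (rule DERIV_cong, (rule derivative_eq_intros refl)+) (simp add: E_def)
        moreover have "(- (c i * P) / fact (Suc m)) * (of_nat (Suc m) * (E b - E x)^m * (0 - \<i> * of_real \<omega> * E x))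
            = c i * (\<i> * of_real \<omega> * E x) * (P * (E b - E x)^m / fact m)"
        proof -
          have "(of_nat (Suc m) :: complex) / fact (Suc m) = 1 / fact m"
            by (simp add: fact_Suc divide_simps del: of_nat_Suc)
          have "(- (c i * P) / fact (Suc m)) * (of_nat (Suc m) * (E b - E x)^m * (0 - \<i> * of_real \<omega> * E x))
             = ((of_nat (Suc m) :: complex) / fact (Suc m)) * (- (c i * P) * (E b - E x)^m * (0 - \<i> * of_real \<omega> * E x))"
            by (simp only: times_divide_eq_left times_divide_eq_right mult_ac)
          also have "\<dots> = (1 / fact m) * (- (c i * P) * (E b - E x)^m * (0 - \<i> * of_real \<omega> * E x))"
            by (simp only: \<open>(of_nat (Suc m) :: complex) / fact (Suc m) = 1 / fact m\<close>)
          also have "\<dots> = c i * (\<i> * of_real \<omega> * E x) * (P * (E b - E x)^m / fact m)"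
            by (simp add: algebra_simps)
          finally show ?thesis .
        qed
        ultimately have "((\<lambda>z. (- (c i * P) / fact (Suc m)) * (E b - exp (\<i> * (of_real \<omega> * (z - of_real t0))))^Suc m)
           has_field_derivative c i * (\<i> * of_real \<omega> * E x) * (P * (E b - E x)^m / fact m)) (at (of_real x))"
          by simp
        from has_vector_derivative_real_field[OF this]
        show "(F has_vector_derivative c i * (\<i> * of_real \<omega> * E x) * (P * (E b - E x)^m / fact m)) (at x within {a..b})"
          unfolding F_def E_def by (auto intro: has_vector_derivative_at_within simp: algebra_simps)
      qed
      show "\<And>x. x \<in> {a..b} - {} \<Longrightarrow> 
         vector_derivative (\<gamma> i) (at x within {a..b}) * path_sig \<gamma> I x b = c i * (\<i> * of_real \<omega> * E x) * (P * (E b - E x)^m / fact m)"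
        using vd IH ab by auto
    qed auto
    then have "path_sig \<gamma> (i#I) a b = F b - F a" by (simp add: integral_unique)
    also have "\<dots> = (\<Prod>k<length (i#I). c ((i#I)!k)) * (E b - E a)^length (i#I) / fact (length (i#I))"
    proof -
      have "(\<Prod>k<length (i#I). c ((i#I)!k)) = c i * P"
        unfolding P_def m_def by (simp only: length_Cons prod.lessThan_Suc_shift) simp
      then show ?thesis unfolding F_def m_def by simp
    qed
    finally show ?thesis .
  qed
qed
lemma lin_phase:
  fixes theta :: "nat \<Rightarrow> real \<Rightarrow> real" and tSS \<omega> :: real
  assumes K: "kuramoto_solution N C om theta"
    and D: "\<forall>i<N. \<forall>t\<ge>tSS. deriv (theta i) t = \<omega>"
    and i: "i < N" and t: "t \<ge> tSS"
  shows "theta i t = theta i tSS + \<omega> * (t - tSS)"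
proof -
  have dall: "\<exists>d. (theta i has_real_derivative d) (at s)" for s
    using K i unfolding kuramoto_solution_def by blast
  have dw: "(theta i has_real_derivative \<omega>) (at s)" if "s \<ge> tSS" for s
  proof -
    obtain d where d: "(theta i has_real_derivative d) (at s)" using dall by blast
    then have "deriv (theta i) s = d" by (rule DERIV_imp_deriv)
    with D i that d show ?thesis by auto
  qed
  define h where "h = (\<lambda>s. theta i s - \<omega> * (s - tSS))"
  show ?thesis
  proof (cases "t = tSS")
    case True then show ?thesis by simp
  next
    case False
    then have lt: "tSS < t" using t by simp
    have "h t = h tSS"
    proof (rule DERIV_isconst2[OF lt])
      show "continuous_on {tSS..t} h"
        unfolding h_def using dall
        by (intro continuous_at_imp_continuous_on ballI continuous_intros)
           (metis DERIV_isCont)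
      fix x assume "tSS < x" "x < t"
      then have "(theta i has_real_derivative \<omega>) (at x)" using dw by auto
      then have "(h has_real_derivative \<omega> - \<omega> * (1 - 0)) (at x)"
        unfolding h_def by (intro DERIV_diff DERIV_cmult DERIV_ident DERIV_const)
      then show "(h has_real_derivative 0) (at x)" by simp
    qed (use lt in auto)
    then show ?thesis unfolding h_def by simp
  qed
qed

theorem lemma18:
  fixes N :: nat and C :: "nat \<Rightarrow> nat \<Rightarrow> real" and om :: "nat \<Rightarrow> real"
    and theta :: "nat \<Rightarrow> real \<Rightarrow> real" and tSS \<omega> T :: real
  assumes "kuramoto_solution N C om theta"
    and "sync_steady_state N theta tSS"
    and "\<forall>i<N. \<forall>t\<ge>tSS. deriv (theta i) t = \<omega>"
    and "T > 0"
  shows "(\<forall>I. length I \<ge> 1 \<and> set I \<subseteq> {..<N} \<longrightarrow>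
            sig_SS (exp_i_path theta) tSS I T =
              exp (\<i> * complex_of_real (\<Sum>k<length I. theta (I ! k) tSS)) / fact (length I)
              * (exp (\<i> * complex_of_real (\<omega> * T)) - 1) ^ length I)
       \<and> (\<forall>i<N. \<forall>j<N. lead_SS (exp_i_path theta) tSS i j T = 0)"
proof -
  define c where "c = (\<lambda>i. exp (\<i> * complex_of_real (theta i tSS)))"
  define E where "E = (\<lambda>s::real. exp (\<i> * complex_of_real (\<omega> * (s - tSS))))"
  have eq: "exp_i_path theta i s = c i * E s" if "i < N" "s \<ge> tSS" for i s
  proof -
    have "theta i s = theta i tSS + \<omega> * (s - tSS)"
      using lin_phase[OF assms(1) assms(3) that] .
    then show ?thesis unfolding exp_i_path_def c_def E_def
      by (simp add: distrib_left exp_add)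
  qed
  have main: "path_sig (exp_i_path theta) I tSS (tSS + T) =
     (\<Prod>k<length I. c (I!k)) * (exp (\<i> * complex_of_real (\<omega> * T)) - 1)^length I / fact (length I)"
    if "set I \<subseteq> {..<N}" for I
  proof -
    have "path_sig (exp_i_path theta) I tSS (tSS + T) =
     (\<Prod>k<length I. c (I!k)) * (E (tSS + T) - E tSS)^length I / fact (length I)"
      unfolding E_def
      by (rule sig_formula) (use that eq assms(4) in \<open>auto simp: E_def\<close>)
    then show ?thesis by (simp add: E_def)
  qed
  have prodc: "(\<Prod>k<length I. c (I!k)) = exp (\<i> * complex_of_real (\<Sum>k<length I. theta (I ! k) tSS))" for I
    unfolding c_def by (simp add: of_real_sum sum_distrib_left exp_sum)
  show ?thesis
  proof (intro conjI allI impI)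
    fix I :: "nat list" assume "1 \<le> length I \<and> set I \<subseteq> {..<N}"
    then show "sig_SS (exp_i_path theta) tSS I T =
              exp (\<i> * complex_of_real (\<Sum>k<length I. theta (I ! k) tSS)) / fact (length I)
              * (exp (\<i> * complex_of_real (\<omega> * T)) - 1) ^ length I"
      unfolding sig_SS_def using main prodc by simp
  next
    fix i j assume "i < N" "j < N"
    then have a: "path_sig (exp_i_path theta) [i,j] tSS (tSS + T) =
     (\<Prod>k<length [i,j]. c ([i,j]!k)) * (exp (\<i> * complex_of_real (\<omega> * T)) - 1)^length [i,j] / fact (length [i,j])"
      and b: "path_sig (exp_i_path theta) [j,i] tSS (tSS + T) =
     (\<Prod>k<length [j,i]. c ([j,i]!k)) * (exp (\<i> * complex_of_real (\<omega> * T)) - 1)^length [j,i] / fact (length [j,i])"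
      using main[of "[i,j]"] main[of "[j,i]"] by auto
    show "lead_SS (exp_i_path theta) tSS i j T = 0"
      unfolding lead_SS_def lead_matrix_def a b
      by (simp add: mult_ac numeral_2_eq_2)
  qed
qed

end
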